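(* Let $\Gamma\le N-1$. Consider the three problems: (P$_\Gamma$) $\displaystyle\min_{\bm w\in\widehat{\mathcal V},\,\bm y\in\mathbb R^{N-1}}\bm w^\top\bar{\bm g}$ s.t. $w_i-(\bm c_{[N-1]})_i\in[-y_i\underline v_i,\,y_i\bar v_i]$ ($i\in[N-1]$), $0\le y_i\le1$, $\bm e^\top\bm y=\Gamma$; (L$_\Gamma$) $\displaystyle\max\ I_2(\bm\eta,\bm\theta)+I_1(\underline{\bm\lambda},\bar{\bm\lambda},\Gamma)$ over $(\underline{\bm\lambda},\bar{\bm\lambda},\beta,\bm\eta,\bm\theta)$ satisfying $\bar{\bm g}-\underline{\bm\lambda}+\bar{\bm\lambda}+\beta\bm e-\bm\eta+\sum_{m=1}^M\theta_mh_m\bm\Delta^m=\bm 0$, $\underline{\bm\lambda},\bar{\bm\lambda},\bm\eta,\bm\theta\ge0$, where $I_2(\bm\eta,\bm\theta):=\bm c_{[N-1]}^\top\bar{\bm g}-\bm\eta^\top\bm c_{[N-1]}+\sum_{m=1}^M\theta_mh_m\bm c_{[N-1]}^\top\bm\Delta^m$ and $I_1(\underline{\bm\lambda},\bar{\bm\lambda},\Gamma):=\min\{\sum_{i=1}^{N-1}y_i(-(\underline\lambda_i\underline v_i+\bar\lambda_i\bar v_i)):0\le y_i\le1,\ \bm e^\top\bm y=\Gamma\}$; (D$_\Gamma$) $\displaystyle\max\ \bm c_{[N-1]}^\top\bar{\bm g}-\bm\eta^\top\bm c_{[N-1]}-\sum_{i=1}^{N-1}\tau_i-\tau_0\Gamma+\sum_{m=1}^M\theta_mh_m\bm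 c_{[N-1]}^\top\bm\Delta^m$ over $\underline{\bm\lambda},\bar{\bm\lambda},\bm\eta,\bm\tau\in\mathbb R^{N-1}$, $\beta,\tau_0\in\mathbb R$, $\bm\theta\in\mathbb R^M$ subject to $\bar{\bm g}-\underline{\bm\lambda}+\bar{\bm\lambda}+\beta\bm e-\bm\eta+\sum_{m=1}^M\theta_mh_m\bm\Delta^m=\bm 0$, $-\underline\lambda_i\underline v_i-\bar\lambda_i\bar v_i+\tau_i+\tau_0\ge0$ ($i\in[N-1]$), $\underline{\bm\lambda},\bar{\bm\lambda},\bm\eta,\bm\theta,\bm\tau\ge0$. Then (P$_\Gamma$) and (L$_\Gamma$) can both be reformulated as (D$_\Gamma$): their optimal values coincide with the optimal value of (D$_\Gamma$).
   Context: Let $N\ge3$ be an integer and $\underline x=x_1<x_2<\cdots<x_N=\bar x$ real numbers; $\bm e$ denotes the all-ones vector of the appropriate dimension. Define $\bm g:[\underline x,\bar x]\to\mathbb R^{N-1}$ by $\bm g(x_1)=\bm 0$ and, for $x\in(x_i,x_{i+1}]$ ($i\in\{1,\dots,N-1\}$), $\bm g(x)=(1,\dots,1,\frac{x-x_i}{x_{i+1}-x_i},0,\dots,0)$ with the first $i-1$ entries equal to $1$, the $i$-th entry $\frac{x-x_i}{x_{i+1}-x_i}$ and the last $N-1-i$ entries $0$. For $\bm v\in\mathbb R^{N-2}$ let $\bm R\bm v:=(v_1,\dots,v_{N-2},1-\bm e^\top\bm v)\in\mathbb R^{N-1}$. Let $\bm z\in\mathbb R^n$ and $\bm\xi^1,\dots,\bm\xi^K\in\mathbb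 R^n$ with $\bm z^\top\bm\xi^k\in[\underline x,\bar x]$ (the distribution of $\bm\xi$ puts mass $1/K$ on each $\bm\xi^k$), and $\bar{\bm g}:=\frac1K\sum_{k=1}^K\bm g(\bm z^\top\bm\xi^k)$. Let $M\ge1$ and, for $m=1,\dots,M$, let $r_1^m\le r_3^m$ and $r_2^m$ lie in $[\underline x,\bar x]$, $p^m\in[0,1]$, $h_m\in\{-1,1\}$, and $\bm\Delta^m:=(1-p^m)\bm g(r_1^m)+p^m\bm g(r_3^m)-\bm g(r_2^m)$. Let $\mathcal V:=\{\bm v\in\mathbb R^{N-2}:\bm v\ge0,\ \bm e^\top\bm v\le1,\ h_m(\bm R\bm v)^\top\bm\Delta^m\le0,\ m\in[M]\}$, assumed to have nonempty interior, let $\bm c\in\mathbb R^{N-2}$ be its analytic center (maximizer over the interior of the sum of the logarithms of the slacks of the defining inequalities) and $\bm c_{[N-1]}:=\bm R\bm c$ (so $\bm e^\top\bm c_{[N-1]}=1$). For $i\in[N-1]$ let $\underline v_i:=-\min\{(\bm R\bm v)_i-(\bm c_{[N-1]})_i:\bm v\in\mathcal V\}$ and $\bar v_i:=\max\{(\bm R\bm v)_i-(\bm c_{[N-1]})_i:\bm v\in\mathcal V\}$. Let $\widehat{\mathcal V}:=\{\bm w\in\mathbb R^{N-1}_+:\bm e^\top\bm w=1,\ h_m\bm w^\top\bm\Delta^m\le0,\ m\in[M]\}$. Optimal values are understood in the extended reals. *)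

theory Defs
  imports "HOL-Analysis.Analysis"
begin

text \<open>Vectors of R^(N-1), R^(N-2), R^M are represented as functions nat => real,
  indexed 1-based: entries 1..N-1, 1..N-2, 1..M respectively.\<close>

definition dotN :: "nat \<Rightarrow> (nat \<Rightarrow> real) \<Rightarrow> (nat \<Rightarrow> real) \<Rightarrow> real" where
  "dotN N a b = (\<Sum>i=1..N-1. a i * b i)"

definition gfun :: "nat \<Rightarrow> (nat \<Rightarrow> real) \<Rightarrow> real \<Rightarrow> nat \<Rightarrow> real" where
  "gfun N x t j =
    (if t = x 1 then 0
     else (let i = (THE i. i \<in> {1..N-1} \<and> x i < t \<and> t \<le> x (Suc i)) in
       if j \<in> {1..N-1} then
         (if j < i then 1 else if j = i then (t - x i) / (x (Suc i) - x i) else 0)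
       else 0))"

definition Rmap :: "nat \<Rightarrow> (nat \<Rightarrow> real) \<Rightarrow> nat \<Rightarrow> real" where
  "Rmap N v j = (if j \<in> {1..N-2} then v j
                 else if j = N - 1 then 1 - (\<Sum>i=1..N-2. v i) else 0)"

definition Delta :: "nat \<Rightarrow> (nat \<Rightarrow> real) \<Rightarrow> (nat \<Rightarrow> real) \<Rightarrow> (nat \<Rightarrow> real)
    \<Rightarrow> (nat \<Rightarrow> real) \<Rightarrow> (nat \<Rightarrow> real) \<Rightarrow> nat \<Rightarrow> nat \<Rightarrow> real" where
  "Delta N x r1 r2 r3 p m j =
     (1 - p m) * gfun N x (r1 m) j + p m * gfun N x (r3 m) j - gfun N x (r2 m) j"

definition Vset :: "nat \<Rightarrow> nat \<Rightarrow> (nat \<Rightarrow> real) \<Rightarrow> (nat \<Rightarrow> nat \<Rightarrow> real) \<Rightarrow> (nat \<Rightarrow> real) set" where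
  "Vset N M h \<Delta> = {v. (\<forall>i. i \<notin> {1..N-2} \<longrightarrow> v i = 0) \<and>
       (\<forall>i\<in>{1..N-2}. 0 \<le> v i) \<and> (\<Sum>i=1..N-2. v i) \<le> 1 \<and>
       (\<forall>m\<in>{1..M}. h m * dotN N (Rmap N v) (\<Delta> m) \<le> 0)}"

text \<open>Interior of a subset of R^(N-2) (embedded as functions supported on 1..N-2).\<close>
definition coord_interior :: "nat \<Rightarrow> (nat \<Rightarrow> real) set \<Rightarrow> (nat \<Rightarrow> real) set" where
  "coord_interior N S = {v \<in> S. \<exists>e>0. \<forall>u. (\<forall>i. i \<notin> {1..N-2} \<longrightarrow> u i = 0) \<and>
       (\<forall>i\<in>{1..N-2}. \<bar>u i - v i\<bar> < e) \<longrightarrow> u \<in> S}"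

definition logbarrier :: "nat \<Rightarrow> nat \<Rightarrow> (nat \<Rightarrow> real) \<Rightarrow> (nat \<Rightarrow> nat \<Rightarrow> real) \<Rightarrow> (nat \<Rightarrow> real) \<Rightarrow> real" where
  "logbarrier N M h \<Delta> v =
     (\<Sum>i=1..N-2. ln (v i)) + ln (1 - (\<Sum>i=1..N-2. v i)) +
     (\<Sum>m=1..M. ln (- (h m * dotN N (Rmap N v) (\<Delta> m))))"

definition analytic_center :: "nat \<Rightarrow> nat \<Rightarrow> (nat \<Rightarrow> real) \<Rightarrow> (nat \<Rightarrow> nat \<Rightarrow> real) \<Rightarrow> (nat \<Rightarrow> real) \<Rightarrow> bool" where
  "analytic_center N M h \<Delta> c \<longleftrightarrow>
     c \<in> coord_interior N (Vset N M h \<Delta>) \<and>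
     (\<forall>v \<in> coord_interior N (Vset N M h \<Delta>). logbarrier N M h \<Delta> v \<le> logbarrier N M h \<Delta> c)"

definition vlow :: "nat \<Rightarrow> nat \<Rightarrow> (nat \<Rightarrow> real) \<Rightarrow> (nat \<Rightarrow> nat \<Rightarrow> real) \<Rightarrow> (nat \<Rightarrow> real) \<Rightarrow> nat \<Rightarrow> real" where
  "vlow N M h \<Delta> c i = - Inf {Rmap N v i - Rmap N c i | v. v \<in> Vset N M h \<Delta>}"

definition vup :: "nat \<Rightarrow> nat \<Rightarrow> (nat \<Rightarrow> real) \<Rightarrow> (nat \<Rightarrow> nat \<Rightarrow> real) \<Rightarrow> (nat \<Rightarrow> real) \<Rightarrow> nat \<Rightarrow> real" where
  "vup N M h \<Delta> c i = Sup {Rmap N v i - Rmap N c i | v. v \<in> Vset N M h \<Delta>}"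

definition Vhat :: "nat \<Rightarrow> nat \<Rightarrow> (nat \<Rightarrow> real) \<Rightarrow> (nat \<Rightarrow> nat \<Rightarrow> real) \<Rightarrow> (nat \<Rightarrow> real) set" where
  "Vhat N M h \<Delta> = {w. (\<forall>i\<in>{1..N-1}. 0 \<le> w i) \<and> (\<Sum>i=1..N-1. w i) = 1 \<and>
       (\<forall>m\<in>{1..M}. h m * dotN N w (\<Delta> m) \<le> 0)}"

definition Yset :: "nat \<Rightarrow> real \<Rightarrow> (nat \<Rightarrow> real) set" where
  "Yset N \<Gamma> = {y. (\<forall>i\<in>{1..N-1}. 0 \<le> y i \<and> y i \<le> 1) \<and> (\<Sum>i=1..N-1. y i) = \<Gamma>}"

definition P_val :: "nat \<Rightarrow> nat \<Rightarrow> (nat \<Rightarrow> real) \<Rightarrow> (nat \<Rightarrow> nat \<Rightarrow> real) \<Rightarrow> (nat \<Rightarrow> real)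
    \<Rightarrow> (nat \<Rightarrow> real) \<Rightarrow> real \<Rightarrow> ereal" where
  "P_val N M h \<Delta> gb c \<Gamma> =
     Inf {ereal (dotN N w gb) | w y. w \<in> Vhat N M h \<Delta> \<and> y \<in> Yset N \<Gamma> \<and>
        (\<forall>i\<in>{1..N-1}. - (y i * vlow N M h \<Delta> c i) \<le> w i - Rmap N c i \<and>
                       w i - Rmap N c i \<le> y i * vup N M h \<Delta> c i)}"

definition I1 :: "nat \<Rightarrow> nat \<Rightarrow> (nat \<Rightarrow> real) \<Rightarrow> (nat \<Rightarrow> nat \<Rightarrow> real) \<Rightarrow> (nat \<Rightarrow> real)
    \<Rightarrow> (nat \<Rightarrow> real) \<Rightarrow> (nat \<Rightarrow> real) \<Rightarrow> real \<Rightarrow> ereal" where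
  "I1 N M h \<Delta> c lu lb \<Gamma> =
     Inf {ereal (\<Sum>i=1..N-1. y i * (- (lu i * vlow N M h \<Delta> c i + lb i * vup N M h \<Delta> c i)))
          | y. y \<in> Yset N \<Gamma>}"

definition I2 :: "nat \<Rightarrow> nat \<Rightarrow> (nat \<Rightarrow> real) \<Rightarrow> (nat \<Rightarrow> nat \<Rightarrow> real) \<Rightarrow> (nat \<Rightarrow> real)
    \<Rightarrow> (nat \<Rightarrow> real) \<Rightarrow> (nat \<Rightarrow> real) \<Rightarrow> (nat \<Rightarrow> real) \<Rightarrow> real" where
  "I2 N M h \<Delta> gb c \<eta> \<theta> =
     dotN N (Rmap N c) gb - dotN N \<eta> (Rmap N c) +
     (\<Sum>m=1..M. \<theta> m * h m * dotN N (Rmap N c) (\<Delta> m))"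

definition dual_feas :: "nat \<Rightarrow> nat \<Rightarrow> (nat \<Rightarrow> real) \<Rightarrow> (nat \<Rightarrow> nat \<Rightarrow> real) \<Rightarrow> (nat \<Rightarrow> real)
    \<Rightarrow> (nat \<Rightarrow> real) \<Rightarrow> (nat \<Rightarrow> real) \<Rightarrow> real \<Rightarrow> (nat \<Rightarrow> real) \<Rightarrow> (nat \<Rightarrow> real) \<Rightarrow> bool" where
  "dual_feas N M h \<Delta> gb lu lb \<beta> \<eta> \<theta> \<longleftrightarrow>
     (\<forall>i\<in>{1..N-1}. gb i - lu i + lb i + \<beta> - \<eta> i + (\<Sum>m=1..M. \<theta> m * h m * \<Delta> m i) = 0) \<and>
     (\<forall>i\<in>{1..N-1}. 0 \<le> lu i \<and> 0 \<le> lb i \<and> 0 \<le> \<eta> i) \<and>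
     (\<forall>m\<in>{1..M}. 0 \<le> \<theta> m)"

definition L_val :: "nat \<Rightarrow> nat \<Rightarrow> (nat \<Rightarrow> real) \<Rightarrow> (nat \<Rightarrow> nat \<Rightarrow> real) \<Rightarrow> (nat \<Rightarrow> real)
    \<Rightarrow> (nat \<Rightarrow> real) \<Rightarrow> real \<Rightarrow> ereal" where
  "L_val N M h \<Delta> gb c \<Gamma> =
     Sup {ereal (I2 N M h \<Delta> gb c \<eta> \<theta>) + I1 N M h \<Delta> c lu lb \<Gamma> | lu lb \<beta> \<eta> \<theta>.
            dual_feas N M h \<Delta> gb lu lb \<beta> \<eta> \<theta>}"

definition D_val :: "nat \<Rightarrow> nat \<Rightarrow> (nat \<Rightarrow> real) \<Rightarrow> (nat \<Rightarrow> nat \<Rightarrow> real) \<Rightarrow> (nat \<Rightarrow> real)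
    \<Rightarrow> (nat \<Rightarrow> real) \<Rightarrow> real \<Rightarrow> ereal" where
  "D_val N M h \<Delta> gb c \<Gamma> =
     Sup {ereal (dotN N (Rmap N c) gb - dotN N \<eta> (Rmap N c) - (\<Sum>i=1..N-1. \<tau> i) - \<tau>0 * \<Gamma> +
                 (\<Sum>m=1..M. \<theta> m * h m * dotN N (Rmap N c) (\<Delta> m)))
          | lu lb \<eta> \<tau> \<beta> \<tau>0 \<theta>. dual_feas N M h \<Delta> gb lu lb \<beta> \<eta> \<theta> \<and>
             (\<forall>i\<in>{1..N-1}. - (lu i * vlow N M h \<Delta> c i) - lb i * vup N M h \<Delta> c i + \<tau> i + \<tau>0 \<ge> 0
                            \<and> 0 \<le> \<tau> i)}"

end

theory Submission
  imports Defs
begin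

definition satr :: "'j set \<Rightarrow> (('j \<Rightarrow> real) \<times> real) set \<Rightarrow> ('j \<Rightarrow> real) \<Rightarrow> bool" where
  "satr J S x \<longleftrightarrow> (\<forall>r\<in>S. (\<Sum>k\<in>J. fst r k * x k) \<le> snd r)"

lemma sum_ind_mult:
  "finite S \<Longrightarrow> (\<Sum>x\<in>S. (if x = r then (a::real) else 0) * f x) = (if r \<in> S then a * f r else 0)"
  by (induction S rule: finite_induct) auto

lemma fm_rows:
  assumes "finite J"
  shows "finite S \<Longrightarrow> \<not> (\<exists>x. satr J S x) \<Longrightarrow>
    \<exists>l. (\<forall>r\<in>S. 0 \<le> l r) \<and> (\<forall>k\<in>J. (\<Sum>r\<in>S. l r * fst r k) = 0) \<and> (\<Sum>r\<in>S. l r * snd r) < 0"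
  using assms
proof (induction J arbitrary: S rule: finite_induct)
  case empty
  then obtain r where r: "r \<in> S" "snd r < 0"
    unfolding satr_def by force
  show ?case
    by (rule exI[of _ "\<lambda>r'. if r' = r then 1 else 0"]) (use r empty in \<open>auto simp: sum_ind_mult\<close>)
next
  case (insert j J)
  define Pos where "Pos = {r\<in>S. fst r j > 0}"
  define Neg where "Neg = {r\<in>S. fst r j < 0}"
  define Zer where "Zer = {r\<in>S. fst r j = 0}"
  define comb where "comb = (\<lambda>(p::('a \<Rightarrow> real) \<times> real) (q::('a \<Rightarrow> real) \<times> real).
      ((\<lambda>k. (- fst q j) * fst p k + fst p j * fst q k), (- fst q j) * snd p + fst p j * snd q))"
  define S' where "S' = Zer \<union> (\<lambda>(p,q). comb p q) ` (Pos \<times> Neg)"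
  have finS: "finite Pos" "finite Neg" "finite Zer" using insert.prems(1) by (auto simp: Pos_def Neg_def Zer_def)
  have finS': "finite S'" unfolding S'_def using finS by auto
  have nsat': "\<not> (\<exists>x. satr J S' x)"
  proof
    assume "\<exists>x. satr J S' x"
    then obtain x' where x': "satr J S' x'" by blast
    define e where "e = (\<lambda>r::('a \<Rightarrow> real) \<times> real. \<Sum>k\<in>J. fst r k * x' k)"
    define up where "up = (\<lambda>r::('a \<Rightarrow> real) \<times> real. (snd r - e r) / fst r j)"
    have ecomb: "e (comb p q) = (- fst q j) * e p + fst p j * e q" for p q
      unfolding e_def comb_def by (simp add: sum.distrib sum_distrib_left sum_subtractf sum_negf algebra_simps)
    have lu: "up q \<le> up p" if "p \<in> Pos" "q \<in> Neg" for p q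
    proof -
      have "comb p q \<in> S'" unfolding S'_def using that by auto
      then have "e (comb p q) \<le> snd (comb p q)" using x' unfolding satr_def e_def by blast
      then have h: "(- fst q j) * e p + fst p j * e q \<le> (- fst q j) * snd p + fst p j * snd q"
        unfolding ecomb by (simp add: comb_def)
      have ap: "fst p j > 0" and aq: "fst q j < 0" using that by (auto simp: Pos_def Neg_def)
      have "snd p - e p = fst p j * up p" "snd q - e q = fst q j * up q"
        using ap aq by (auto simp: up_def)
      with h have "0 \<le> (- fst q j) * (fst p j * up p) + fst p j * (fst q j * up q)"
        by (simp add: algebra_simps)
      then have "0 \<le> (fst p j * (- fst q j)) * (up p - up q)" by (simp add: algebra_simps)
      moreover have "fst p j * (- fst q j) > 0" using ap aq by (metis mult_pos_pos neg_0_less_iff_less)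
      ultimately have "0 \<le> up p - up q" using zero_le_mult_iff by (metis less_le_not_le)
      then show ?thesis by simp
    qed
    define t where "t = (if Pos = {} then (if Neg = {} then 0 else Max (up ` Neg)) else Min (up ` Pos))"
    have tP: "t \<le> up p" if "p \<in> Pos" for p
      using that finS by (auto simp: t_def)
    have tN: "up q \<le> t" if "q \<in> Neg" for q
    proof (cases "Pos = {}")
      case True then show ?thesis using that finS by (auto simp: t_def)
    next
      case False then show ?thesis using that finS lu by (auto simp: t_def intro!: Min.boundedI)
    qed
    define x where "x = x'(j := t)"
    have "satr (insert j J) S x"
      unfolding satr_def
    proof
      fix r assume r: "r \<in> S"
      have eq: "(\<Sum>k\<in>insert j J. fst r k * x k) = fst r j * t + e r"
        using insert.hyps unfolding e_def x_def by (auto intro!: sum.cong)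
      consider "r \<in> Pos" | "r \<in> Neg" | "r \<in> Zer" using r unfolding Pos_def Neg_def Zer_def by force
      then show "(\<Sum>k\<in>insert j J. fst r k * x k) \<le> snd r"
      proof cases
        case 1
        then have a: "fst r j > 0" by (simp add: Pos_def)
        have "fst r j * t \<le> fst r j * up r" using tP[OF 1] a by (simp add: mult_left_mono)
        also have "\<dots> = snd r - e r" using a by (simp add: up_def)
        finally show ?thesis using eq by simp
      next
        case 2
        then have a: "fst r j < 0" by (simp add: Neg_def)
        have "fst r j * t \<le> fst r j * up r" using tN[OF 2] a by (simp add: mult_left_mono_neg)
        also have "\<dots> = snd r - e r" using a by (simp add: up_def)
        finally show ?thesis using eq by simp
      next
        case 3
        then have "r \<in> S'" "fst r j = 0" by (auto simp: S'_def Zer_def)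
        then show ?thesis using x' eq unfolding satr_def e_def by auto
      qed
    qed
    then show False using insert.prems(2) by blast
  qed
  obtain l' where l': "\<forall>r\<in>S'. 0 \<le> l' r" "\<forall>k\<in>J. (\<Sum>r\<in>S'. l' r * fst r k) = 0" "(\<Sum>r\<in>S'. l' r * snd r) < 0"
    using insert.IH[OF finS' nsat'] by blast
  define Q where "Q = (\<lambda>s \<mu>. (\<forall>r\<in>S. 0 \<le> \<mu> r) \<and> (\<forall>k. fst s k = (\<Sum>r\<in>S. \<mu> r * fst r k)) \<and> snd s = (\<Sum>r\<in>S. \<mu> r * snd r)
        \<and> fst s j = (0::real))"
  have rep: "\<exists>\<mu>. Q s \<mu>"
  if s: "s \<in> S'" for s
  proof -
    show ?thesis
    proof (cases "s \<in> Zer")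
      case True
      then have "s \<in> S" "fst s j = 0" by (auto simp: Zer_def)
      then show ?thesis
        by (intro exI[of _ "\<lambda>r. if r = s then 1 else 0"])
           (auto simp: sum_ind_mult insert.prems(1) Q_def)
    next
      case False
      then obtain p q where pq: "p \<in> Pos" "q \<in> Neg" "s = comb p q" using s by (auto simp: S'_def)
      then have pS: "p \<in> S" "q \<in> S" "p \<noteq> q" and ap: "fst p j > 0" and aq: "fst q j < 0"
        by (auto simp: Pos_def Neg_def)
      define \<mu> where "\<mu> = (\<lambda>r. (if r = p then - fst q j else 0) + (if r = q then fst p j else 0))"
      have sm: "(\<Sum>r\<in>S. \<mu> r * f r) = (- fst q j) * f p + fst p j * f q" for f
        unfolding \<mu>_def using pS insert.prems(1)
        by (simp add: distrib_right sum.distrib sum_ind_mult)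
      show ?thesis unfolding Q_def
        apply (intro exI[of _ \<mu>] conjI allI ballI)
        subgoal using ap aq by (auto simp: \<mu>_def)
        subgoal by (simp only: sm pq comb_def prod.case fst_conv snd_conv)
        subgoal by (simp only: sm pq comb_def prod.case fst_conv snd_conv)
        subgoal by (simp add: pq comb_def)
        done
    qed
  qed
  have "\<forall>s\<in>S'. \<exists>\<mu>. Q s \<mu>" using rep by blast
  then obtain \<mu> where \<mu>: "\<forall>s\<in>S'. Q s (\<mu> s)" by (metis bchoice)
  have \<mu>1: "\<And>s r. s \<in> S' \<Longrightarrow> r \<in> S \<Longrightarrow> 0 \<le> \<mu> s r"
   and \<mu>2': "\<And>s k. s \<in> S' \<Longrightarrow> fst s k = (\<Sum>r\<in>S. \<mu> s r * fst r k)"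
   and \<mu>3': "\<And>s. s \<in> S' \<Longrightarrow> snd s = (\<Sum>r\<in>S. \<mu> s r * snd r)"
   and \<mu>4: "\<And>s. s \<in> S' \<Longrightarrow> fst s j = 0"
    using \<mu> unfolding Q_def by blast+
  note \<mu>2 = \<mu>2'[symmetric] and \<mu>3 = \<mu>3'[symmetric]
  define l where "l = (\<lambda>r. \<Sum>s\<in>S'. l' s * \<mu> s r)"
  have swap: "(\<Sum>r\<in>S. l r * f r) = (\<Sum>s\<in>S'. l' s * (\<Sum>r\<in>S. \<mu> s r * f r))" for f
    unfolding l_def sum_distrib_right sum_distrib_left by (subst sum.swap) (simp add: mult.assoc)
  show ?case
  proof (intro exI[of _ l] conjI ballI)
    fix r assume "r \<in> S" then show "0 \<le> l r"
      unfolding l_def using \<mu>1 l'(1) by (intro sum_nonneg mult_nonneg_nonneg) auto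
  next
    fix k assume k: "k \<in> insert j J"
    have "(\<Sum>r\<in>S. l r * fst r k) = (\<Sum>s\<in>S'. l' s * fst s k)"
      unfolding swap by (rule sum.cong) (simp_all add: \<mu>2)
    also have "\<dots> = 0"
    proof (cases "k = j")
      case True then show ?thesis using \<mu>4 by (auto intro!: sum.neutral)
    next
      case False then show ?thesis using k l'(2) by auto
    qed
    finally show "(\<Sum>r\<in>S. l r * fst r k) = 0" .
  next
    have "(\<Sum>r\<in>S. l r * snd r) = (\<Sum>s\<in>S'. l' s * snd s)"
      unfolding swap by (rule sum.cong) (simp_all add: \<mu>3)
    then show "(\<Sum>r\<in>S. l r * snd r) < 0" using l'(3) by simp
  qed
qed


lemma fm_idx:
  fixes A :: "'i \<Rightarrow> 'j \<Rightarrow> real" and B :: "'i \<Rightarrow> real"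
  assumes fI: "finite I" and fJ: "finite J" and ns: "\<not> (\<exists>x. \<forall>i\<in>I. (\<Sum>k\<in>J. A i k * x k) \<le> B i)"
  shows "\<exists>\<kappa>. (\<forall>i\<in>I. 0 \<le> \<kappa> i) \<and> (\<forall>k\<in>J. (\<Sum>i\<in>I. \<kappa> i * A i k) = 0) \<and> (\<Sum>i\<in>I. \<kappa> i * B i) < 0"
proof -
  define row where "row = (\<lambda>i. (A i, B i))"
  define S where "S = row ` I"
  have fS: "finite S" using fI by (simp add: S_def)
  have "\<not> (\<exists>x. satr J S x)" using ns by (auto simp: satr_def S_def row_def)
  then obtain l where l: "\<forall>r\<in>S. 0 \<le> l r" "\<forall>k\<in>J. (\<Sum>r\<in>S. l r * fst r k) = 0" "(\<Sum>r\<in>S. l r * snd r) < 0"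
    using fm_rows[OF fJ fS] by blast
  define \<kappa> where "\<kappa> = (\<lambda>i. l (row i) / real (card {i'\<in>I. row i' = row i}))"
  have key: "(\<Sum>i\<in>I. \<kappa> i * g (row i)) = (\<Sum>r\<in>S. l r * g r)" for g
  proof -
    have "(\<Sum>i\<in>I. \<kappa> i * g (row i)) = (\<Sum>r\<in>S. \<Sum>i\<in>{i'\<in>I. row i' = r}. \<kappa> i * g (row i))"
      unfolding S_def by (rule sum.image_gen[OF fI])
    also have "\<dots> = (\<Sum>r\<in>S. l r * g r)"
    proof (rule sum.cong[OF refl])
      fix r assume "r \<in> S"
      then obtain i0 where i0: "i0 \<in> I" "r = row i0" by (auto simp: S_def)
      have fin: "finite {i'\<in>I. row i' = r}" using fI by auto
      have pos: "card {i'\<in>I. row i' = r} > 0" using i0 fin by (auto simp: card_gt_0_iff)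
      have "(\<Sum>i\<in>{i'\<in>I. row i' = r}. \<kappa> i * g (row i)) = (\<Sum>i\<in>{i'\<in>I. row i' = r}. l r / real (card {i'\<in>I. row i' = r}) * g r)"
        by (rule sum.cong) (auto simp: \<kappa>_def)
      also have "\<dots> = l r * g r" using pos by simp
      finally show "(\<Sum>i\<in>{i'\<in>I. row i' = r}. \<kappa> i * g (row i)) = l r * g r" .
    qed
    finally show ?thesis .
  qed
  show ?thesis
  proof (intro exI[of _ \<kappa>] conjI ballI)
    fix i assume "i \<in> I" then show "0 \<le> \<kappa> i"
      using l(1) by (auto simp: \<kappa>_def S_def)
  next
    fix k assume k: "k \<in> J"
    have "(\<Sum>i\<in>I. \<kappa> i * A i k) = (\<Sum>i\<in>I. \<kappa> i * (\<lambda>r. fst r k) (row i))" by (simp add: row_def)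
    also have "\<dots> = 0" using key[of "\<lambda>r. fst r k"] l(2) k by simp
    finally show "(\<Sum>i\<in>I. \<kappa> i * A i k) = 0" .
  next
    have "(\<Sum>i\<in>I. \<kappa> i * B i) = (\<Sum>i\<in>I. \<kappa> i * snd (row i))" by (simp add: row_def)
    also have "\<dots> = (\<Sum>r\<in>S. l r * snd r)" by (rule key)
    finally show "(\<Sum>i\<in>I. \<kappa> i * B i) < 0" using l(3) by simp
  qed
qed

lemma lp_eps:
  fixes A :: "'i \<Rightarrow> 'j \<Rightarrow> real" and B :: "'i \<Rightarrow> real" and cv :: "'j \<Rightarrow> real"
  assumes fI: "finite I" and fJ: "finite J" and x0: "\<forall>i\<in>I. (\<Sum>k\<in>J. A i k * x0 k) \<le> B i"
    and bnd: "\<forall>x. (\<forall>i\<in>I. (\<Sum>k\<in>J. A i k * x k) \<le> B i) \<longrightarrow> p \<le> (\<Sum>k\<in>J. cv k * x k)"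
    and e: "e > 0"
  shows "\<exists>\<kappa>. (\<forall>i\<in>I. 0 \<le> \<kappa> i) \<and> (\<forall>k\<in>J. (\<Sum>i\<in>I. \<kappa> i * A i k) = - cv k) \<and> p - e \<le> - (\<Sum>i\<in>I. \<kappa> i * B i)"
proof -
  define A' where "A' = (\<lambda>u. case u of None \<Rightarrow> cv | Some i \<Rightarrow> A i)"
  define B' where "B' = (\<lambda>u. case u of None \<Rightarrow> p - e | Some i \<Rightarrow> B i)"
  define I' where "I' = insert None (Some ` I)"
  have fI': "finite I'" using fI by (simp add: I'_def)
  have sumI': "(\<Sum>u\<in>I'. f u) = f None + (\<Sum>i\<in>I. f (Some i))" for f :: "_ \<Rightarrow> real"
    unfolding I'_def using fI by (simp add: sum.reindex)
  have "\<not> (\<exists>x. \<forall>u\<in>I'. (\<Sum>k\<in>J. A' u k * x k) \<le> B' u)"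
  proof
    assume "\<exists>x. \<forall>u\<in>I'. (\<Sum>k\<in>J. A' u k * x k) \<le> B' u"
    then obtain x where x: "\<forall>u\<in>I'. (\<Sum>k\<in>J. A' u k * x k) \<le> B' u" by blast
    have "\<forall>i\<in>I. (\<Sum>k\<in>J. A i k * x k) \<le> B i" using x by (auto simp: I'_def A'_def B'_def)
    then have "p \<le> (\<Sum>k\<in>J. cv k * x k)" using bnd by blast
    moreover have "(\<Sum>k\<in>J. cv k * x k) \<le> p - e" using x by (auto simp: I'_def A'_def B'_def)
    ultimately show False using e by simp
  qed
  then obtain \<kappa> where \<kappa>: "\<forall>u\<in>I'. 0 \<le> \<kappa> u" "\<forall>k\<in>J. (\<Sum>u\<in>I'. \<kappa> u * A' u k) = 0" "(\<Sum>u\<in>I'. \<kappa> u * B' u) < 0"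
    using fm_idx[OF fI' fJ] by blast
  define \<mu> where "\<mu> = \<kappa> None"
  have st: "\<mu> * cv k + (\<Sum>i\<in>I. \<kappa> (Some i) * A i k) = 0" if "k \<in> J" for k
    using \<kappa>(2) that by (simp add: sumI' A'_def \<mu>_def)
  have ob: "\<mu> * (p - e) + (\<Sum>i\<in>I. \<kappa> (Some i) * B i) < 0" using \<kappa>(3) by (simp add: sumI' B'_def \<mu>_def)
  have \<mu>0: "\<mu> \<ge> 0" using \<kappa>(1) by (simp add: I'_def \<mu>_def)
  have k0: "\<forall>i\<in>I. 0 \<le> \<kappa> (Some i)" using \<kappa>(1) by (simp add: I'_def)
  have "\<mu> \<noteq> 0"
  proof
    assume m0: "\<mu> = 0"
    then have st0: "\<forall>k\<in>J. (\<Sum>i\<in>I. \<kappa> (Some i) * A i k) = 0" using st by simp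
    have "(\<Sum>i\<in>I. \<kappa> (Some i) * (\<Sum>k\<in>J. A i k * x0 k)) \<le> (\<Sum>i\<in>I. \<kappa> (Some i) * B i)"
      using k0 x0 by (intro sum_mono mult_left_mono) auto
    moreover have "(\<Sum>i\<in>I. \<kappa> (Some i) * (\<Sum>k\<in>J. A i k * x0 k)) = (\<Sum>k\<in>J. (\<Sum>i\<in>I. \<kappa> (Some i) * A i k) * x0 k)"
      unfolding sum_distrib_left sum_distrib_right by (subst sum.swap) (simp add: mult.assoc)
    ultimately have "0 \<le> (\<Sum>i\<in>I. \<kappa> (Some i) * B i)" using st0 by simp
    with ob m0 show False by simp
  qed
  with \<mu>0 have \<mu>p: "\<mu> > 0" by simp
  show ?thesis
  proof (intro exI[of _ "\<lambda>i. \<kappa> (Some i) / \<mu>"] conjI ballI)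
    fix i assume "i \<in> I" then show "0 \<le> \<kappa> (Some i) / \<mu>" using k0 \<mu>p by simp
  next
    fix k assume k: "k \<in> J"
    have "(\<Sum>i\<in>I. \<kappa> (Some i) / \<mu> * A i k) = (\<Sum>i\<in>I. \<kappa> (Some i) * A i k) / \<mu>"
      by (simp add: sum_divide_distrib)
    also have "\<dots> = - cv k" using st[OF k] \<mu>p by (simp add: field_simps)
    finally show "(\<Sum>i\<in>I. \<kappa> (Some i) / \<mu> * A i k) = - cv k" .
  next
    have "(\<Sum>i\<in>I. \<kappa> (Some i) / \<mu> * B i) = (\<Sum>i\<in>I. \<kappa> (Some i) * B i) / \<mu>"
      by (simp add: sum_divide_distrib)
    moreover have "(\<Sum>i\<in>I. \<kappa> (Some i) * B i) / \<mu> < - (p - e)"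
      using ob \<mu>p by (simp add: field_simps)
    ultimately show "p - e \<le> - (\<Sum>i\<in>I. \<kappa> (Some i) / \<mu> * B i)" by simp
  qed
qed

lemma dual_ident:
  assumes df: "dual_feas N M h \<Delta> gb lu lb \<beta> \<eta> \<theta>" and sw: "(\<Sum>i=1..N-1. w i) = 1"
  shows "dotN N w gb = (\<Sum>i=1..N-1. w i * (lu i - lb i)) - \<beta> + dotN N w \<eta>
           - (\<Sum>m=1..M. \<theta> m * h m * dotN N w (\<Delta> m))"
proof -
  have g: "gb i = lu i - lb i - \<beta> + \<eta> i - (\<Sum>m=1..M. \<theta> m * h m * \<Delta> m i)" if "i \<in> {1..N-1}" for i
  proof -
    have "gb i - lu i + lb i + \<beta> - \<eta> i + (\<Sum>m=1..M. \<theta> m * h m * \<Delta> m i) = 0"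
      using df that unfolding dual_feas_def by blast
    then show ?thesis by linarith
  qed
  have sw2: "(\<Sum>i=1..N-1. (\<Sum>m=1..M. \<theta> m * h m * (w i * \<Delta> m i))) = (\<Sum>m=1..M. \<theta> m * h m * dotN N w (\<Delta> m))"
    unfolding dotN_def sum_distrib_left by (rule sum.swap)
  have sb: "(\<Sum>i=1..N-1. \<beta> * w i) = \<beta>" using sw by (simp add: sum_distrib_left[symmetric])
  have "dotN N w gb = (\<Sum>i=1..N-1. w i * (lu i - lb i) - \<beta> * w i + w i * \<eta> i
        - (\<Sum>m=1..M. \<theta> m * h m * (w i * \<Delta> m i)))"
    unfolding dotN_def by (rule sum.cong[OF refl]) (simp add: g algebra_simps sum_distrib_left)
  also have "\<dots> = (\<Sum>i=1..N-1. w i * (lu i - lb i)) - (\<Sum>i=1..N-1. \<beta> * w i) + (\<Sum>i=1..N-1. w i * \<eta> i)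
        - (\<Sum>i=1..N-1. (\<Sum>m=1..M. \<theta> m * h m * (w i * \<Delta> m i)))"
    by (simp only: sum.distrib sum_subtractf)
  finally show ?thesis unfolding sw2 sb by (simp add: dotN_def)
qed

lemma Rmap_sum:
  assumes "N \<ge> 3"
  shows "(\<Sum>i=1..N-1. Rmap N v i) = 1"
proof -
  have e: "{1..N-1} = insert (N-1) {1..N-2}" using assms by auto
  have "(\<Sum>i=1..N-1. Rmap N v i) = Rmap N v (N-1) + (\<Sum>i=1..N-2. Rmap N v i)"
    unfolding e by (subst sum.insert) auto
  also have "(\<Sum>i=1..N-2. Rmap N v i) = (\<Sum>i=1..N-2. v i)" by (rule sum.cong) (auto simp: Rmap_def)
  also have "Rmap N v (N-1) = 1 - (\<Sum>i=1..N-2. v i)" using assms by (auto simp: Rmap_def)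
  finally show ?thesis by simp
qed

lemma Rmap_bounds:
  assumes "N \<ge> 3" "v \<in> Vset N M h \<Delta>"
  shows "0 \<le> Rmap N v i \<and> Rmap N v i \<le> 1"
proof -
  have nn: "\<forall>i\<in>{1..N-2}. 0 \<le> v i" and s1: "(\<Sum>i=1..N-2. v i) \<le> 1"
    using assms(2) by (auto simp: Vset_def)
  have s0: "0 \<le> (\<Sum>i=1..N-2. v i)" using nn by (auto intro: sum_nonneg)
  show ?thesis
  proof (cases "i \<in> {1..N-2}")
    case True
    have "v i \<le> (\<Sum>i=1..N-2. v i)" using True nn by (intro member_le_sum) auto
    then show ?thesis using True nn s1 by (auto simp: Rmap_def)
  next
    case False then show ?thesis using s0 s1 by (auto simp: Rmap_def)
  qed
qed

lemma Vset_range_bounds: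
  assumes "N \<ge> 3" "c \<in> Vset N M h \<Delta>"
  shows "0 \<le> vlow N M h \<Delta> c i" "0 \<le> vup N M h \<Delta> c i"
proof -
  define T where "T = {Rmap N v i - Rmap N c i | v. v \<in> Vset N M h \<Delta>}"
  have z: "0 \<in> T" using assms(2) unfolding T_def by force
  have Tb: "- 1 - Rmap N c i \<le> t \<and> t \<le> 1 - Rmap N c i" if "t \<in> T" for t
  proof -
    obtain v where v: "v \<in> Vset N M h \<Delta>" "t = Rmap N v i - Rmap N c i" using \<open>t \<in> T\<close> by (auto simp: T_def)
    show ?thesis using Rmap_bounds[OF assms(1) v(1), of i] v(2) by linarith
  qed
  have bb: "bdd_below T" unfolding bdd_below_def using Tb by blast
  have ba: "bdd_above T" unfolding bdd_above_def using Tb by blast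
  have "Inf T \<le> 0" by (rule cInf_lower[OF z bb])
  then show "0 \<le> vlow N M h \<Delta> c i" by (simp add: vlow_def T_def)
  have "0 \<le> Sup T" by (rule cSup_upper[OF z ba])
  then show "0 \<le> vup N M h \<Delta> c i" by (simp add: vup_def T_def)
qed

lemma inner_weak:
  assumes y: "y \<in> Yset N \<Gamma>" and t: "\<forall>i\<in>{1..N-1}. a i + \<tau> i + \<tau>0 \<ge> 0 \<and> 0 \<le> \<tau> i"
  shows "- (\<Sum>i=1..N-1. \<tau> i) - \<tau>0 * \<Gamma> \<le> (\<Sum>i=1..N-1. y i * a i)"
proof -
  have y1: "\<forall>i\<in>{1..N-1}. 0 \<le> y i \<and> y i \<le> 1" and ys: "(\<Sum>i=1..N-1. y i) = \<Gamma>"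
    using y by (auto simp: Yset_def)
  have "(\<Sum>i=1..N-1. - \<tau> i - \<tau>0 * y i) \<le> (\<Sum>i=1..N-1. y i * a i)"
  proof (rule sum_mono)
    fix i assume i: "i \<in> {1..N-1}"
    have "0 \<le> a i + \<tau> i + \<tau>0" using t i by blast
    then have "- \<tau> i - \<tau>0 \<le> a i" by linarith
    then have "y i * (- \<tau> i - \<tau>0) \<le> y i * a i" using y1 i by (intro mult_left_mono) auto
    moreover have "y i * \<tau> i \<le> \<tau> i" using y1 t i by (simp add: mult_left_le_one_le)
    ultimately show "- \<tau> i - \<tau>0 * y i \<le> y i * a i" by (simp add: algebra_simps)
  qed
  also have "(\<Sum>i=1..N-1. - \<tau> i - \<tau>0 * y i) = - (\<Sum>i=1..N-1. \<tau> i) - \<tau>0 * \<Gamma>"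
    using ys by (simp add: sum_subtractf sum_negf sum_distrib_left[symmetric])
  finally show ?thesis .
qed

lemma key_ineq:
  assumes N3: "N \<ge> 3"
    and df: "dual_feas N M h \<Delta> gb lu lb \<beta> \<eta> \<theta>"
    and w: "w \<in> Vhat N M h \<Delta>" and y: "y \<in> Yset N \<Gamma>"
    and box: "\<forall>i\<in>{1..N-1}. - (y i * vl i) \<le> w i - Rmap N c i \<and> w i - Rmap N c i \<le> y i * vu i"
  shows "I2 N M h \<Delta> gb c \<eta> \<theta> + (\<Sum>i=1..N-1. y i * (- (lu i * vl i + lb i * vu i))) \<le> dotN N w gb"
proof -
  define C where "C = Rmap N c"
  have sC: "(\<Sum>i=1..N-1. C i) = 1" unfolding C_def by (rule Rmap_sum[OF N3])
  have sw: "(\<Sum>i=1..N-1. w i) = 1" and w0: "\<forall>i\<in>{1..N-1}. 0 \<le> w i"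
    and wh: "\<forall>m\<in>{1..M}. h m * dotN N w (\<Delta> m) \<le> 0" using w by (auto simp: Vhat_def)
  have dfc: "\<forall>i\<in>{1..N-1}. 0 \<le> lu i \<and> 0 \<le> lb i \<and> 0 \<le> \<eta> i" "\<forall>m\<in>{1..M}. 0 \<le> \<theta> m"
    using df by (auto simp: dual_feas_def)
  have I2e: "I2 N M h \<Delta> gb c \<eta> \<theta> = (\<Sum>i=1..N-1. C i * (lu i - lb i)) - \<beta>"
    using dual_ident[OF df sC] unfolding I2_def C_def by (simp add: dotN_def mult.commute)
  have ew: "dotN N w gb = (\<Sum>i=1..N-1. w i * (lu i - lb i)) - \<beta> + dotN N w \<eta>
           - (\<Sum>m=1..M. \<theta> m * h m * dotN N w (\<Delta> m))" by (rule dual_ident[OF df sw])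
  have a1: "(\<Sum>i=1..N-1. y i * (- (lu i * vl i + lb i * vu i))) \<le> (\<Sum>i=1..N-1. (w i - C i) * (lu i - lb i))"
  proof (rule sum_mono)
    fix i assume i: "i \<in> {1..N-1}"
    have "- (y i * vl i) * lu i \<le> (w i - C i) * lu i" using box i dfc by (intro mult_right_mono) (auto simp: C_def)
    moreover have "(w i - C i) * lb i \<le> (y i * vu i) * lb i" using box i dfc by (intro mult_right_mono) (auto simp: C_def)
    ultimately show "y i * (- (lu i * vl i + lb i * vu i)) \<le> (w i - C i) * (lu i - lb i)"
      by (simp add: algebra_simps)
  qed
  have a2: "0 \<le> dotN N w \<eta>" unfolding dotN_def using w0 dfc by (intro sum_nonneg) auto
  have a3: "(\<Sum>m=1..M. \<theta> m * h m * dotN N w (\<Delta> m)) \<le> 0"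
  proof (rule sum_nonpos)
    fix m assume m: "m \<in> {1..M}"
    have "\<theta> m * (h m * dotN N w (\<Delta> m)) \<le> 0" by (rule mult_nonneg_nonpos) (use m wh dfc in auto)
    then show "\<theta> m * h m * dotN N w (\<Delta> m) \<le> 0" by (simp add: mult.assoc)
  qed
  have "(\<Sum>i=1..N-1. (w i - C i) * (lu i - lb i)) = (\<Sum>i=1..N-1. w i * (lu i - lb i)) - (\<Sum>i=1..N-1. C i * (lu i - lb i))"
    by (simp add: left_diff_distrib sum_subtractf)
  then show ?thesis using I2e ew a1 a2 a3 by linarith
qed

datatype cix = CW nat | CL nat | CU nat | CY0 nat | CY1 nat | CH nat | CS1 | CS2 | CG1 | CG2

lemma sum_ind_mult2:
  "finite S \<Longrightarrow> (\<Sum>a\<in>S. g a * (if k = a then (v::real) else 0)) = (if k \<in> S then g k * v else 0)"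
  by (induction S rule: finite_induct) auto

lemma sum_ind_mult3:
  "finite S \<Longrightarrow> (\<Sum>a\<in>S. g a * (if k = a then (v a::real) else 0)) = (if k \<in> S then g k * v k else 0)"
  by (induction S rule: finite_induct) auto

lemma sum_cix:
  fixes g :: "cix \<Rightarrow> real"
  assumes "finite X" "finite Y"
  shows "(\<Sum>i\<in>CW ` X \<union> (CL ` X \<union> (CU ` X \<union> (CY0 ` X \<union> (CY1 ` X \<union> (CH ` Y \<union> {CS1, CS2, CG1, CG2}))))). g i)
    = (\<Sum>a\<in>X. g (CW a)) + ((\<Sum>a\<in>X. g (CL a)) + ((\<Sum>a\<in>X. g (CU a)) + ((\<Sum>a\<in>X. g (CY0 a)) +
      ((\<Sum>a\<in>X. g (CY1 a)) + ((\<Sum>m\<in>Y. g (CH m)) + (g CS1 + g CS2 + g CG1 + g CG2))))))"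
proof -
  define R6 where "R6 = {CS1, CS2, CG1, CG2}"
  define R5 where "R5 = CH ` Y \<union> R6"
  define R4 where "R4 = CY1 ` X \<union> R5"
  define R3 where "R3 = CY0 ` X \<union> R4"
  define R2 where "R2 = CU ` X \<union> R3"
  define R1 where "R1 = CL ` X \<union> R2"
  have f: "finite R6" "finite R5" "finite R4" "finite R3" "finite R2" "finite R1"
    using assms by (auto simp: R1_def R2_def R3_def R4_def R5_def R6_def)
  have "sum g (CW ` X \<union> R1) = sum g (CW ` X) + sum g R1"
    by (rule sum.union_disjoint) (use assms f in \<open>auto simp: R1_def R2_def R3_def R4_def R5_def R6_def\<close>)
  moreover have "sum g R1 = sum g (CL ` X) + sum g R2" unfolding R1_def
    by (rule sum.union_disjoint) (use assms f in \<open>auto simp: R2_def R3_def R4_def R5_def R6_def\<close>)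
  moreover have "sum g R2 = sum g (CU ` X) + sum g R3" unfolding R2_def
    by (rule sum.union_disjoint) (use assms f in \<open>auto simp: R3_def R4_def R5_def R6_def\<close>)
  moreover have "sum g R3 = sum g (CY0 ` X) + sum g R4" unfolding R3_def
    by (rule sum.union_disjoint) (use assms f in \<open>auto simp: R4_def R5_def R6_def\<close>)
  moreover have "sum g R4 = sum g (CY1 ` X) + sum g R5" unfolding R4_def
    by (rule sum.union_disjoint) (use assms f in \<open>auto simp: R5_def R6_def\<close>)
  moreover have "sum g R5 = sum g (CH ` Y) + sum g R6" unfolding R5_def
    by (rule sum.union_disjoint) (use assms f in \<open>auto simp: R6_def\<close>)
  moreover have "sum g R6 = g CS1 + g CS2 + g CG1 + g CG2" by (simp add: R6_def)
  ultimately show ?thesis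
    unfolding R1_def[symmetric] R2_def[symmetric] R3_def[symmetric] R4_def[symmetric] R5_def[symmetric] R6_def[symmetric]
    by (simp add: sum.reindex inj_on_def)
qed

lemma sum_J:
  fixes f :: "bool \<times> nat \<Rightarrow> real"
  shows "(\<Sum>j\<in>(UNIV::bool set) \<times> X. f j) = (\<Sum>k\<in>X. f (False, k)) + (\<Sum>k\<in>X. f (True, k))"
proof -
  have "(\<Sum>j\<in>(UNIV::bool set) \<times> X. f j) = (\<Sum>b\<in>UNIV. \<Sum>k\<in>X. f (b, k))"
    by (simp add: sum.cartesian_product)
  also have "\<dots> = (\<Sum>k\<in>X. f (False, k)) + (\<Sum>k\<in>X. f (True, k))"
    by (simp add: UNIV_bool)
  finally show ?thesis .
qed


lemma strong_eps:
  fixes vl vu :: "nat \<Rightarrow> real" and C :: "nat \<Rightarrow> real"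
  assumes N3: "N \<ge> 3"
    and CV: "C \<in> Vhat N M h \<Delta>"
    and vl0: "\<forall>i. 0 \<le> vl i" and vu0: "\<forall>i. 0 \<le> vu i"
    and G0: "0 \<le> \<Gamma>" and G1: "\<Gamma> \<le> real (N - 1)"
    and bound: "\<forall>w y. w \<in> Vhat N M h \<Delta> \<and> y \<in> Yset N \<Gamma> \<and>
        (\<forall>i\<in>{1..N-1}. - (y i * vl i) \<le> w i - C i \<and> w i - C i \<le> y i * vu i) \<longrightarrow> p \<le> dotN N w gb"
    and e: "e > 0"
  shows "\<exists>lu lb \<eta> \<tau> \<beta> \<tau>0 \<theta>. dual_feas N M h \<Delta> gb lu lb \<beta> \<eta> \<theta> \<and>
     (\<forall>i\<in>{1..N-1}. - (lu i * vl i) - lb i * vu i + \<tau> i + \<tau>0 \<ge> 0 \<and> 0 \<le> \<tau> i) \<and>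
     p - e \<le> (\<Sum>i=1..N-1. C i * (lu i - lb i)) - \<beta> - (\<Sum>i=1..N-1. \<tau> i) - \<tau>0 * \<Gamma>"
proof -
  define X where "X = {1..N-1}"
  have fX: "finite X" by (simp add: X_def)
  define Aw :: "cix \<Rightarrow> nat \<Rightarrow> real" where "Aw = (\<lambda>i k. case i of CW a \<Rightarrow> (if k = a then -1 else 0)
     | CL a \<Rightarrow> (if k = a then -1 else 0) | CU a \<Rightarrow> (if k = a then 1 else 0) | CY0 a \<Rightarrow> 0 | CY1 a \<Rightarrow> 0
     | CH m \<Rightarrow> h m * \<Delta> m k | CS1 \<Rightarrow> 1 | CS2 \<Rightarrow> -1 | CG1 \<Rightarrow> 0 | CG2 \<Rightarrow> 0)"
  define Ay :: "cix \<Rightarrow> nat \<Rightarrow> real" where "Ay = (\<lambda>i k. case i of CW a \<Rightarrow> 0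
     | CL a \<Rightarrow> (if k = a then - vl a else 0) | CU a \<Rightarrow> (if k = a then - vu a else 0)
     | CY0 a \<Rightarrow> (if k = a then -1 else 0) | CY1 a \<Rightarrow> (if k = a then 1 else 0)
     | CH m \<Rightarrow> 0 | CS1 \<Rightarrow> 0 | CS2 \<Rightarrow> 0 | CG1 \<Rightarrow> 1 | CG2 \<Rightarrow> -1)"
  define Bc :: "cix \<Rightarrow> real" where "Bc = (\<lambda>i. case i of CW a \<Rightarrow> 0 | CL a \<Rightarrow> - C a | CU a \<Rightarrow> C a
     | CY0 a \<Rightarrow> 0 | CY1 a \<Rightarrow> 1 | CH m \<Rightarrow> 0 | CS1 \<Rightarrow> 1 | CS2 \<Rightarrow> -1 | CG1 \<Rightarrow> \<Gamma> | CG2 \<Rightarrow> - \<Gamma>)"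
  define A :: "cix \<Rightarrow> bool \<times> nat \<Rightarrow> real" where "A = (\<lambda>i j. if fst j then Ay i (snd j) else Aw i (snd j))"
  define cv :: "bool \<times> nat \<Rightarrow> real" where "cv = (\<lambda>j. if fst j then 0 else gb (snd j))"
  define J where "J = (UNIV::bool set) \<times> X"
  define I where "I = CW ` X \<union> (CL ` X \<union> (CU ` X \<union> (CY0 ` X \<union> (CY1 ` X \<union> (CH ` {1..M} \<union> {CS1, CS2, CG1, CG2})))))"
  have fI: "finite I" using fX by (simp add: I_def)
  have fJ: "finite J" using fX by (simp add: J_def)
  have sI: "(\<Sum>i\<in>I. g i) = (\<Sum>a\<in>X. g (CW a)) + ((\<Sum>a\<in>X. g (CL a)) + ((\<Sum>a\<in>X. g (CU a)) + ((\<Sum>a\<in>X. g (CY0 a)) +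
      ((\<Sum>a\<in>X. g (CY1 a)) + ((\<Sum>m\<in>{1..M}. g (CH m)) + (g CS1 + g CS2 + g CG1 + g CG2))))))" for g :: "cix \<Rightarrow> real"
    unfolding I_def by (rule sum_cix[OF fX]) simp
  have rs: "(\<Sum>j\<in>J. A i j * x j) = (\<Sum>k\<in>X. Aw i k * x (False, k)) + (\<Sum>k\<in>X. Ay i k * x (True, k))" for i x
    unfolding J_def by (simp add: sum_J A_def)
  define feas where "feas = (\<lambda>x. \<forall>i\<in>I. (\<Sum>j\<in>J. A i j * x j) \<le> Bc i)"
  have feas_iff: "feas x \<longleftrightarrow>
      (\<forall>a\<in>X. - x (False, a) \<le> 0) \<and>
      (\<forall>a\<in>X. - x (False, a) - vl a * x (True, a) \<le> - C a) \<and>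
      (\<forall>a\<in>X. x (False, a) - vu a * x (True, a) \<le> C a) \<and>
      (\<forall>a\<in>X. - x (True, a) \<le> 0) \<and>
      (\<forall>a\<in>X. x (True, a) \<le> 1) \<and>
      (\<forall>m\<in>{1..M}. h m * dotN N (\<lambda>k. x (False, k)) (\<Delta> m) \<le> 0) \<and>
      (\<Sum>k\<in>X. x (False, k)) \<le> 1 \<and> - (\<Sum>k\<in>X. x (False, k)) \<le> -1 \<and>
      (\<Sum>k\<in>X. x (True, k)) \<le> \<Gamma> \<and> - (\<Sum>k\<in>X. x (True, k)) \<le> - \<Gamma>" for x
  proof -
    have hm: "(\<Sum>k\<in>X. h m * \<Delta> m k * x (False, k)) = h m * dotN N (\<lambda>k. x (False, k)) (\<Delta> m)" for m
      unfolding dotN_def X_def by (simp add: sum_distrib_left mult_ac)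
    show ?thesis
      unfolding feas_def I_def rs
      by (simp add: Aw_def Ay_def Bc_def sum_ind_mult fX hm sum_negf ball_Un del: Un_insert_right Un_insert_left)
  qed
  have sumC: "(\<Sum>k\<in>X. C k) = 1" and C0: "\<forall>k\<in>X. 0 \<le> C k"
    and Ch: "\<forall>m\<in>{1..M}. h m * dotN N C (\<Delta> m) \<le> 0"
    using CV by (auto simp: Vhat_def X_def)
  define y0 where "y0 = \<Gamma> / real (N - 1)"
  have Npos: "real (N - 1) > 0" using N3 by simp
  have y00: "0 \<le> y0" and y01: "y0 \<le> 1" using G0 G1 Npos by (auto simp: y0_def divide_le_eq_1)
  have cX: "card X = N - 1" by (simp add: X_def)
  have sy0: "(\<Sum>k\<in>X. y0) = \<Gamma>" using Npos by (simp add: cX y0_def)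
  define x0 where "x0 = (\<lambda>j::bool \<times> nat. if fst j then y0 else C (snd j))"
  have "feas x0"
    unfolding feas_iff using C0 sumC Ch y00 y01 sy0 vl0 vu0
    by (simp add: x0_def)
  have bnd: "\<forall>x. feas x \<longrightarrow> p \<le> (\<Sum>j\<in>J. cv j * x j)"
  proof (intro allI impI)
    fix x assume fx: "feas x"
    define w where "w = (\<lambda>k. x (False, k))"
    define y where "y = (\<lambda>k. x (True, k))"
    have wV: "w \<in> Vhat N M h \<Delta>" using fx unfolding feas_iff Vhat_def w_def X_def by auto
    have yY: "y \<in> Yset N \<Gamma>" using fx unfolding feas_iff Yset_def y_def X_def by auto
    have bx: "\<forall>i\<in>{1..N-1}. - (y i * vl i) \<le> w i - C i \<and> w i - C i \<le> y i * vu i"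
      using fx unfolding feas_iff w_def y_def X_def by (auto simp: algebra_simps)
    have "p \<le> dotN N w gb" using bound wV yY bx by blast
    also have "dotN N w gb = (\<Sum>j\<in>J. cv j * x j)"
      unfolding J_def sum_J by (simp add: cv_def dotN_def w_def X_def mult.commute)
    finally show "p \<le> (\<Sum>j\<in>J. cv j * x j)" .
  qed
  obtain \<kappa> where \<kappa>0: "\<forall>i\<in>I. 0 \<le> \<kappa> i" and \<kappa>s: "\<forall>j\<in>J. (\<Sum>i\<in>I. \<kappa> i * A i j) = - cv j"
      and \<kappa>o: "p - e \<le> - (\<Sum>i\<in>I. \<kappa> i * Bc i)"
    using lp_eps[OF fI fJ, of A x0 Bc p cv e] \<open>feas x0\<close> bnd e unfolding feas_def by blast
  define lu where "lu = (\<lambda>a. \<kappa> (CL a))"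
  define lb where "lb = (\<lambda>a. \<kappa> (CU a))"
  define \<eta> where "\<eta> = (\<lambda>a. \<kappa> (CW a))"
  define \<theta> where "\<theta> = (\<lambda>m. \<kappa> (CH m))"
  define \<tau> where "\<tau> = (\<lambda>a. \<kappa> (CY1 a))"
  define \<beta> where "\<beta> = \<kappa> CS1 - \<kappa> CS2"
  define \<tau>0 where "\<tau>0 = \<kappa> CG1 - \<kappa> CG2"
  have st1: "gb k - lu k + lb k + \<beta> - \<eta> k + (\<Sum>m=1..M. \<theta> m * h m * \<Delta> m k) = 0" if k: "k \<in> X" for k
  proof -
    have "(False, k) \<in> J" using k by (simp add: J_def)
    then have "(\<Sum>i\<in>I. \<kappa> i * A i (False, k)) = - gb k" using \<kappa>s by (simp add: cv_def)
    then show ?thesis unfolding sI using k fX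
      by (simp add: A_def Aw_def sum_ind_mult2 lu_def lb_def \<eta>_def \<theta>_def \<beta>_def mult_ac)
  qed
  have st2: "- (lu k * vl k) - lb k * vu k + \<tau> k + \<tau>0 = \<kappa> (CY0 k)" if k: "k \<in> X" for k
  proof -
    have "(True, k) \<in> J" using k by (simp add: J_def)
    then have "(\<Sum>i\<in>I. \<kappa> i * A i (True, k)) = 0" using \<kappa>s by (simp add: cv_def)
    then show ?thesis unfolding sI using k fX
      by (simp add: A_def Ay_def sum_ind_mult2 sum_ind_mult3 lu_def lb_def \<tau>_def \<tau>0_def mult_ac)
  qed
  have nn: "\<forall>a\<in>X. 0 \<le> \<kappa> (CW a) \<and> 0 \<le> \<kappa> (CL a) \<and> 0 \<le> \<kappa> (CU a) \<and> 0 \<le> \<kappa> (CY0 a) \<and> 0 \<le> \<kappa> (CY1 a)"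
    "\<forall>m\<in>{1..M}. 0 \<le> \<kappa> (CH m)"
    using \<kappa>0 by (auto simp: I_def)
  have obj: "(\<Sum>i\<in>I. \<kappa> i * Bc i) = - (\<Sum>k\<in>X. C k * (lu k - lb k)) + \<beta> + (\<Sum>k\<in>X. \<tau> k) + \<tau>0 * \<Gamma>"
    unfolding sI
    by (simp add: Bc_def lu_def lb_def \<tau>_def \<beta>_def \<tau>0_def algebra_simps sum_subtractf sum_negf)
  show ?thesis
  proof (intro exI conjI)
    show "dual_feas N M h \<Delta> gb lu lb \<beta> \<eta> \<theta>"
      unfolding dual_feas_def using st1 nn by (auto simp: X_def lu_def lb_def \<eta>_def \<theta>_def)
    show "\<forall>i\<in>{1..N-1}. - (lu i * vl i) - lb i * vu i + \<tau> i + \<tau>0 \<ge> 0 \<and> 0 \<le> \<tau> i"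
      using st2 nn by (auto simp: X_def \<tau>_def)
    show "p - e \<le> (\<Sum>i=1..N-1. C i * (lu i - lb i)) - \<beta> - (\<Sum>i=1..N-1. \<tau> i) - \<tau>0 * \<Gamma>"
      using \<kappa>o obj by (simp add: X_def)
  qed
qed

theorem theorem2:
  fixes N M K :: nat and x :: "nat \<Rightarrow> real"
    and z :: "real ^ 'n" and \<xi> :: "nat \<Rightarrow> real ^ 'n"
    and r1 r2 r3 p h :: "nat \<Rightarrow> real" and c :: "nat \<Rightarrow> real" and \<Gamma> :: real
  defines "\<Delta> \<equiv> Delta N x r1 r2 r3 p"
    and "gb \<equiv> (\<lambda>i. (1 / real K) * (\<Sum>k=1..K. gfun N x (z \<bullet> \<xi> k) i))"
  assumes N3: "N \<ge> 3"
    and x_incr: "\<forall>i\<in>{1..<N}. x i < x (Suc i)"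
    and K1: "K \<ge> 1"
    and xi_range: "\<forall>k\<in>{1..K}. z \<bullet> \<xi> k \<in> {x 1..x N}"
    and M1: "M \<ge> 1"
    and params: "\<forall>m\<in>{1..M}. r1 m \<le> r3 m \<and> r1 m \<in> {x 1..x N} \<and> r2 m \<in> {x 1..x N}
                   \<and> r3 m \<in> {x 1..x N} \<and> p m \<in> {0..1} \<and> (h m = 1 \<or> h m = -1)"
    and V_int: "coord_interior N (Vset N M h \<Delta>) \<noteq> {}"
    and center: "analytic_center N M h \<Delta> c"
    and Gamma: "\<Gamma> \<le> real (N - 1)"
  shows "P_val N M h \<Delta> gb c \<Gamma> = D_val N M h \<Delta> gb c \<Gamma> \<and>
         L_val N M h \<Delta> gb c \<Gamma> = D_val N M h \<Delta> gb c \<Gamma>"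
proof -
  have cV: "c \<in> Vset N M h \<Delta>" using center by (auto simp: analytic_center_def coord_interior_def)
  have vl0: "\<forall>i. 0 \<le> vlow N M h \<Delta> c i" and vu0: "\<forall>i. 0 \<le> vup N M h \<Delta> c i"
    using Vset_range_bounds[OF N3 cV] by auto
  have sC: "(\<Sum>i=1..N-1. Rmap N c i) = 1" by (rule Rmap_sum[OF N3])
  have CV: "Rmap N c \<in> Vhat N M h \<Delta>"
    using Rmap_bounds[OF N3 cV] sC cV by (auto simp: Vhat_def Vset_def)
  define vl where "vl = vlow N M h \<Delta> c"
  define vu where "vu = vup N M h \<Delta> c"
  define Pset where "Pset = {ereal (dotN N w gb) | w y. w \<in> Vhat N M h \<Delta> \<and> y \<in> Yset N \<Gamma> \<and>
        (\<forall>i\<in>{1..N-1}. - (y i * vl i) \<le> w i - Rmap N c i \<and> w i - Rmap N c i \<le> y i * vu i)}"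
  have Pv: "P_val N M h \<Delta> gb c \<Gamma> = Inf Pset" unfolding P_val_def Pset_def vl_def vu_def ..
  have I2e: "I2 N M h \<Delta> gb c \<eta> \<theta> = (\<Sum>i=1..N-1. Rmap N c i * (lu i - lb i)) - \<beta>"
    if df: "dual_feas N M h \<Delta> gb lu lb \<beta> \<eta> \<theta>" for lu lb \<beta> \<eta> \<theta>
    using dual_ident[OF df sC] unfolding I2_def by (simp add: dotN_def mult.commute)
  have I1lb: "ereal (- (\<Sum>i=1..N-1. \<tau> i) - \<tau>0 * \<Gamma>) \<le> I1 N M h \<Delta> c lu lb \<Gamma>"
    if t: "\<forall>i\<in>{1..N-1}. - (lu i * vl i) - lb i * vu i + \<tau> i + \<tau>0 \<ge> 0 \<and> 0 \<le> \<tau> i" for lu lb \<tau> \<tau>0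
    unfolding I1_def vl_def[symmetric] vu_def[symmetric]
  proof (rule Inf_greatest)
    fix z assume "z \<in> {ereal (\<Sum>i = 1..N - 1. y i * - (lu i * vl i + lb i * vu i)) |y. y \<in> Yset N \<Gamma>}"
    then obtain y where y: "y \<in> Yset N \<Gamma>" "z = ereal (\<Sum>i = 1..N - 1. y i * - (lu i * vl i + lb i * vu i))" by blast
    have "- (\<Sum>i=1..N-1. \<tau> i) - \<tau>0 * \<Gamma> \<le> (\<Sum>i = 1..N - 1. y i * - (lu i * vl i + lb i * vu i))"
      by (rule inner_weak[OF y(1)]) (use t in auto)
    then show "ereal (- (\<Sum>i=1..N-1. \<tau> i) - \<tau>0 * \<Gamma>) \<le> z" using y(2) by simp
  qed
  have DL: "D_val N M h \<Delta> gb c \<Gamma> \<le> L_val N M h \<Delta> gb c \<Gamma>"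
    unfolding D_val_def L_val_def
  proof (rule Sup_mono)
    fix d assume "d \<in> {ereal (dotN N (Rmap N c) gb - dotN N \<eta> (Rmap N c) - (\<Sum>i=1..N-1. \<tau> i) - \<tau>0 * \<Gamma> +
                 (\<Sum>m=1..M. \<theta> m * h m * dotN N (Rmap N c) (\<Delta> m)))
          | lu lb \<eta> \<tau> \<beta> \<tau>0 \<theta>. dual_feas N M h \<Delta> gb lu lb \<beta> \<eta> \<theta> \<and>
             (\<forall>i\<in>{1..N-1}. - (lu i * vlow N M h \<Delta> c i) - lb i * vup N M h \<Delta> c i + \<tau> i + \<tau>0 \<ge> 0
                            \<and> 0 \<le> \<tau> i)}"
    then obtain lu lb \<eta> \<tau> \<beta> \<tau>0 \<theta> where df: "dual_feas N M h \<Delta> gb lu lb \<beta> \<eta> \<theta>"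
      and t: "\<forall>i\<in>{1..N-1}. - (lu i * vl i) - lb i * vu i + \<tau> i + \<tau>0 \<ge> 0 \<and> 0 \<le> \<tau> i"
      and d: "d = ereal (I2 N M h \<Delta> gb c \<eta> \<theta> + (- (\<Sum>i=1..N-1. \<tau> i) - \<tau>0 * \<Gamma>))"
      unfolding vl_def vu_def I2_def by (auto simp: algebra_simps)
    have "d \<le> ereal (I2 N M h \<Delta> gb c \<eta> \<theta>) + I1 N M h \<Delta> c lu lb \<Gamma>"
      unfolding d plus_ereal.simps(1)[symmetric] by (rule add_left_mono[OF I1lb[OF t]])
    then show "\<exists>b\<in>{ereal (I2 N M h \<Delta> gb c \<eta> \<theta>) + I1 N M h \<Delta> c lu lb \<Gamma> | lu lb \<beta> \<eta> \<theta>.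
            dual_feas N M h \<Delta> gb lu lb \<beta> \<eta> \<theta>}. d \<le> b" using df by blast
  qed
  have LP: "L_val N M h \<Delta> gb c \<Gamma> \<le> P_val N M h \<Delta> gb c \<Gamma>"
    unfolding Pv L_val_def
  proof (rule Sup_least)
    fix l assume "l \<in> {ereal (I2 N M h \<Delta> gb c \<eta> \<theta>) + I1 N M h \<Delta> c lu lb \<Gamma> | lu lb \<beta> \<eta> \<theta>.
            dual_feas N M h \<Delta> gb lu lb \<beta> \<eta> \<theta>}"
    then obtain lu lb \<beta> \<eta> \<theta> where df: "dual_feas N M h \<Delta> gb lu lb \<beta> \<eta> \<theta>"
      and l: "l = ereal (I2 N M h \<Delta> gb c \<eta> \<theta>) + I1 N M h \<Delta> c lu lb \<Gamma>" by blast
    show "l \<le> Inf Pset"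
    proof (rule Inf_greatest)
      fix q assume "q \<in> Pset"
      then obtain w y where w: "w \<in> Vhat N M h \<Delta>" and y: "y \<in> Yset N \<Gamma>"
        and bx: "\<forall>i\<in>{1..N-1}. - (y i * vl i) \<le> w i - Rmap N c i \<and> w i - Rmap N c i \<le> y i * vu i"
        and q: "q = ereal (dotN N w gb)" unfolding Pset_def by blast
      have "I1 N M h \<Delta> c lu lb \<Gamma> \<le> ereal (\<Sum>i=1..N-1. y i * (- (lu i * vl i + lb i * vu i)))"
        unfolding I1_def vl_def vu_def by (rule Inf_lower) (use y in blast)
      then have "l \<le> ereal (I2 N M h \<Delta> gb c \<eta> \<theta>) + ereal (\<Sum>i=1..N-1. y i * (- (lu i * vl i + lb i * vu i)))"
        unfolding l by (rule add_left_mono)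
      also have "\<dots> \<le> q" unfolding q plus_ereal.simps(1) ereal_less_eq(3)
        by (rule key_ineq[OF N3 df w y bx])
      finally show "l \<le> q" .
    qed
  qed
  define Dset where "Dset = {ereal (dotN N (Rmap N c) gb - dotN N \<eta> (Rmap N c) - (\<Sum>i=1..N-1. \<tau> i) - \<tau>0 * \<Gamma> +
                 (\<Sum>m=1..M. \<theta> m * h m * dotN N (Rmap N c) (\<Delta> m)))
          | lu lb \<eta> \<tau> \<beta> \<tau>0 \<theta>. dual_feas N M h \<Delta> gb lu lb \<beta> \<eta> \<theta> \<and>
             (\<forall>i\<in>{1..N-1}. - (lu i * vl i) - lb i * vu i + \<tau> i + \<tau>0 \<ge> 0 \<and> 0 \<le> \<tau> i)}"
  have Dv: "D_val N M h \<Delta> gb c \<Gamma> = Sup Dset" unfolding D_val_def Dset_def vl_def vu_def ..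
  have Dmem: "ereal (dotN N (Rmap N c) gb - dotN N \<eta> (Rmap N c) - (\<Sum>i=1..N-1. \<tau> i) - \<tau>0 * \<Gamma> +
                 (\<Sum>m=1..M. \<theta> m * h m * dotN N (Rmap N c) (\<Delta> m))) \<le> D_val N M h \<Delta> gb c \<Gamma>"
    if "dual_feas N M h \<Delta> gb lu lb \<beta> \<eta> \<theta>"
       "\<forall>i\<in>{1..N-1}. - (lu i * vl i) - lb i * vu i + \<tau> i + \<tau>0 \<ge> 0 \<and> 0 \<le> \<tau> i" for lu lb \<eta> \<tau> \<beta> \<tau>0 \<theta>
    unfolding Dv by (rule Sup_upper) (unfold Dset_def, use that in blast)
  have PD: "P_val N M h \<Delta> gb c \<Gamma> \<le> D_val N M h \<Delta> gb c \<Gamma>"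
  proof (cases "\<Gamma> < 0")
    case True
    have Ye: "Yset N \<Gamma> = {}"
    proof (rule ccontr)
      assume "Yset N \<Gamma> \<noteq> {}"
      then obtain y where "y \<in> Yset N \<Gamma>" by blast
      then have "\<forall>i\<in>{1..N-1}. 0 \<le> y i" "(\<Sum>i=1..N-1. y i) = \<Gamma>" by (auto simp: Yset_def)
      then have "0 \<le> \<Gamma>" by (metis sum_nonneg)
      then show False using True by simp
    qed
    have "Pset = {}" unfolding Pset_def using Ye by blast
    then have Pinf: "P_val N M h \<Delta> gb c \<Gamma> = \<infinity>" unfolding Pv by (simp add: top_ereal_def)
    define lu where "lu = (\<lambda>i. max (gb i) 0)"
    define lb where "lb = (\<lambda>i. max (- gb i) 0)"
    define \<tau> where "\<tau> = (\<lambda>i. lu i * vl i + lb i * vu i)"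
    have df: "dual_feas N M h \<Delta> gb lu lb 0 (\<lambda>_. 0) (\<lambda>_. 0)"
      unfolding dual_feas_def lu_def lb_def by (auto simp: max_def)
    have "D_val N M h \<Delta> gb c \<Gamma> = \<infinity>"
    proof (rule ereal_top)
      fix B
      define T where "T = max 0 ((B - dotN N (Rmap N c) gb + (\<Sum>i=1..N-1. \<tau> i)) / (- \<Gamma>))"
      have T0: "0 \<le> T" by (simp add: T_def)
      have "(B - dotN N (Rmap N c) gb + (\<Sum>i=1..N-1. \<tau> i)) / (- \<Gamma>) \<le> T" by (simp add: T_def)
      then have TT: "B - dotN N (Rmap N c) gb + (\<Sum>i=1..N-1. \<tau> i) \<le> T * (- \<Gamma>)"
        using pos_divide_le_eq[of "- \<Gamma>"] True by (metis neg_0_less_iff_less)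
      have "ereal B \<le> ereal (dotN N (Rmap N c) gb - dotN N (\<lambda>_. 0) (Rmap N c) - (\<Sum>i=1..N-1. \<tau> i) - T * \<Gamma> +
                 (\<Sum>m=1..M. 0 * h m * dotN N (Rmap N c) (\<Delta> m)))"
        using TT by (simp add: dotN_def algebra_simps)
      also have "\<dots> \<le> D_val N M h \<Delta> gb c \<Gamma>"
        by (rule Dmem[OF df]) (use T0 vl0 vu0 in \<open>auto simp: \<tau>_def lu_def lb_def vl_def vu_def intro!: add_nonneg_nonneg mult_nonneg_nonneg\<close>)
      finally show "ereal B \<le> D_val N M h \<Delta> gb c \<Gamma>" .
    qed
    then show ?thesis by (simp add: Pinf)
  next
    case False
    then have G0: "0 \<le> \<Gamma>" by simp
    define y0 where "y0 = (\<lambda>i::nat. \<Gamma> / real (N - 1))"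
    have Npos: "real (N - 1) > 0" using N3 by simp
    have y0Y: "y0 \<in> Yset N \<Gamma>"
      using G0 Gamma Npos by (auto simp: Yset_def y0_def divide_le_eq_1)
    have "ereal (dotN N (Rmap N c) gb) \<in> Pset"
      unfolding Pset_def using CV y0Y vl0 vu0 G0 by (force simp: y0_def vl_def vu_def)
    then have Pup: "Inf Pset \<le> ereal (dotN N (Rmap N c) gb)" by (rule Inf_lower)
    have Plo: "ereal (- (\<Sum>i=1..N-1. \<bar>gb i\<bar>)) \<le> Inf Pset"
    proof (rule Inf_greatest)
      fix q assume "q \<in> Pset"
      then obtain w where w: "w \<in> Vhat N M h \<Delta>" and q: "q = ereal (dotN N w gb)" unfolding Pset_def by blast
      have w0: "\<forall>i\<in>{1..N-1}. 0 \<le> w i" and sw: "(\<Sum>i=1..N-1. w i) = 1" using w by (auto simp: Vhat_def)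
      have "(\<Sum>i=1..N-1. - \<bar>gb i\<bar>) \<le> dotN N w gb" unfolding dotN_def
      proof (rule sum_mono)
        fix i assume i: "i \<in> {1..N-1}"
        have "w i \<le> 1" using member_le_sum[of i "{1..N-1}" w] w0 i sw by auto
        then have "\<bar>w i * gb i\<bar> \<le> \<bar>gb i\<bar>" using w0 i by (simp add: abs_mult mult_left_le_one_le)
        then show "- \<bar>gb i\<bar> \<le> w i * gb i" by linarith
      qed
      then show "ereal (- (\<Sum>i=1..N-1. \<bar>gb i\<bar>)) \<le> q" using q by (simp add: sum_negf)
    qed
    obtain p where Pp: "Inf Pset = ereal p" using Pup Plo by (cases "Inf Pset") auto
    have bound: "\<forall>w y. w \<in> Vhat N M h \<Delta> \<and> y \<in> Yset N \<Gamma> \<and>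
        (\<forall>i\<in>{1..N-1}. - (y i * vl i) \<le> w i - Rmap N c i \<and> w i - Rmap N c i \<le> y i * vu i) \<longrightarrow> p \<le> dotN N w gb"
    proof (intro allI impI)
      fix w y assume "w \<in> Vhat N M h \<Delta> \<and> y \<in> Yset N \<Gamma> \<and>
        (\<forall>i\<in>{1..N-1}. - (y i * vl i) \<le> w i - Rmap N c i \<and> w i - Rmap N c i \<le> y i * vu i)"
      then have "ereal (dotN N w gb) \<in> Pset" unfolding Pset_def by blast
      then have "Inf Pset \<le> ereal (dotN N w gb)" by (rule Inf_lower)
      then show "p \<le> dotN N w gb" using Pp by simp
    qed
    show ?thesis
    proof (rule ereal_le_epsilon2)
      fix e :: real assume e: "0 < e"
      obtain lu lb \<eta> \<tau> \<beta> \<tau>0 \<theta> where df: "dual_feas N M h \<Delta> gb lu lb \<beta> \<eta> \<theta>"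
        and t: "\<forall>i\<in>{1..N-1}. - (lu i * vl i) - lb i * vu i + \<tau> i + \<tau>0 \<ge> 0 \<and> 0 \<le> \<tau> i"
        and ob: "p - e \<le> (\<Sum>i=1..N-1. Rmap N c i * (lu i - lb i)) - \<beta> - (\<Sum>i=1..N-1. \<tau> i) - \<tau>0 * \<Gamma>"
        using strong_eps[OF N3 CV _ _ G0 Gamma bound e] vl0 vu0 unfolding vl_def vu_def by blast
      have "ereal (p - e) \<le> ereal (dotN N (Rmap N c) gb - dotN N \<eta> (Rmap N c) - (\<Sum>i=1..N-1. \<tau> i) - \<tau>0 * \<Gamma> +
                 (\<Sum>m=1..M. \<theta> m * h m * dotN N (Rmap N c) (\<Delta> m)))"
        using ob I2e[OF df] unfolding I2_def by simp
      also have "\<dots> \<le> D_val N M h \<Delta> gb c \<Gamma>" by (rule Dmem[OF df t])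
      finally have "ereal (p - e) \<le> D_val N M h \<Delta> gb c \<Gamma>" .
      then have "ereal (p - e) + ereal e \<le> D_val N M h \<Delta> gb c \<Gamma> + ereal e" by (rule add_right_mono)
      then show "P_val N M h \<Delta> gb c \<Gamma> \<le> D_val N M h \<Delta> gb c \<Gamma> + ereal e" using Pv Pp by simp
    qed
  qed
  from DL LP PD show ?thesis by (metis order_antisym order_trans)
qed

end
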